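(* Let $p,q$ be positive integers, let $e\in\mathbb{R}^p$ be the vector of all ones, and let $$L:=\{(x,u)\in\mathbb{R}^p\times\mathbb{R}^q : x\ge \|u\|e\}$$ (componentwise order). Let $x,y\in\mathbb{R}^p$ and $u,v\in\mathbb{R}^q\setminus\{0\}$. Then $((x,u),(y,v))\in C(L)$ if and only if there exists $\lambda>0$ such that $v=-\lambda u$, $\langle y,e\rangle=\|v\|$, and $(x-\|u\|e,\,y)\in C(\mathbb{R}^p_+)$, i.e. $x-\|u\|e\ge 0$, $y\ge 0$ and $\langle x-\|u\|e,y\rangle=0$.
   Context: For a proper cone $K\subset\mathbb{R}^\ell$, its dual cone is $K^*:=\{x\in\mathbb{R}^\ell:\langle x,y\rangle\ge0\ \forall y\in K\}$, and its complementarity set is $C(K):=\{(x,y)\in K\times K^*: \langle x,y\rangle=0\}$. Elements of $\mathbb{R}^p\times\mathbb{R}^q$ are identified with vectors of $\mathbb{R}^{p+q}$, with inner product $\langle (x,u),(y,v)\rangle=\langle x,y\rangle+\langle u,v\rangle$. The inequality $\ge$ between vectors is componentwise; $\mathbb{R}^p_+=\{x\in\mathbb{R}^p:x\ge0\}$ (which is self-dual). The cone $L$ is a proper cone, and its dual is $L^*=M:=\{(y,v)\in\mathbb{R}^p\times\mathbb{R}^q:\langle y,e\rangle\ge\|v\|,\ y\ge0\}$. *)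

theory Defs
  imports "HOL-Analysis.Analysis"
begin

definition dual_cone :: "'a::real_inner set \<Rightarrow> 'a set" where
  "dual_cone K = {x. \<forall>y\<in>K. inner x y \<ge> 0}"

definition compl_set :: "'a::real_inner set \<Rightarrow> ('a \<times> 'a) set" where
  "compl_set K = {(x, y). x \<in> K \<and> y \<in> dual_cone K \<and> inner x y = 0}"

definition ones :: "real^'p" where
  "ones = (\<chi> i. 1)"

definition nonneg_orthant :: "(real^'p) set" where
  "nonneg_orthant = {x. x \<ge> 0}"

definition coneL :: "((real^'p) \<times> (real^'q)) set" where
  "coneL = {(x, u). x \<ge> norm u *\<^sub>R ones}"

end

theory Submission
  imports Defs
begin

lemma inner_nonneg_vec:
  fixes a b :: "real^'n"
  assumes "a \<ge> 0" "b \<ge> 0"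
  shows "inner a b \<ge> 0"
  using assms unfolding inner_vec_def less_eq_vec_def
  by (auto intro!: sum_nonneg)

lemma inner_mono_vec:
  fixes a b y :: "real^'n"
  assumes "a \<le> b" "y \<ge> 0"
  shows "inner y a \<le> inner y b"
proof -
  have "inner y (b - a) \<ge> 0" using assms
    by (intro inner_nonneg_vec) (auto simp: less_eq_vec_def)
  thus ?thesis by (simp add: inner_diff_right)
qed

lemma dual_orthant_nonneg:
  fixes y :: "real^'n"
  assumes "y \<in> dual_cone nonneg_orthant"
  shows "y \<ge> 0"
proof -
  { fix i :: 'n
    have "axis i (1::real) \<in> nonneg_orthant"
      by (simp add: nonneg_orthant_def less_eq_vec_def axis_def)
    hence "inner y (axis i 1) \<ge> 0" using assms by (auto simp: dual_cone_def)
    hence "y $ i \<ge> 0" by (simp add: inner_axis) }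
  thus ?thesis by (simp add: less_eq_vec_def)
qed

lemma nonneg_in_dual_orthant:
  fixes y :: "real^'n"
  assumes "y \<ge> 0"
  shows "y \<in> dual_cone nonneg_orthant"
  using assms inner_nonneg_vec unfolding dual_cone_def nonneg_orthant_def by blast

lemma inner_ones_nonneg:
  fixes y :: "real^'n"
  assumes "y \<ge> 0"
  shows "inner y ones \<ge> 0"
  using assms by (intro inner_nonneg_vec) (auto simp: ones_def less_eq_vec_def)

theorem proposition1:
  fixes x y :: "real^'p" and u v :: "real^'q"
  assumes "u \<noteq> 0" and "v \<noteq> 0"
  shows "(((x, u), (y, v)) \<in> compl_set (coneL :: ((real^'p) \<times> (real^'q)) set)) \<longleftrightarrow>
    (\<exists>lam::real. lam > 0 \<and> v = - (lam *\<^sub>R u) \<and> inner y ones = norm v \<and>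
       (x - norm u *\<^sub>R ones, y) \<in> compl_set (nonneg_orthant :: (real^'p) set))"
proof
  assume H: "((x, u), (y, v)) \<in> compl_set (coneL :: ((real^'p) \<times> (real^'q)) set)"
  have xL: "x \<ge> norm u *\<^sub>R ones" using H by (simp add: compl_set_def coneL_def)
  have yd: "\<forall>a w. (a::real^'p) \<ge> norm (w::real^'q) *\<^sub>R ones \<longrightarrow> inner y a + inner v w \<ge> 0"
    using H by (auto simp: compl_set_def coneL_def dual_cone_def)
  have ip: "inner x y + inner u v = 0" using H by (simp add: compl_set_def)
  have y0: "y \<ge> 0"
  proof -
    { fix i :: 'p
      have "axis i (1::real) \<ge> norm (0::real^'q) *\<^sub>R ones"
        by (simp add: less_eq_vec_def axis_def)
      hence "inner y (axis i 1) + inner v 0 \<ge> 0" using yd by blast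
      hence "y $ i \<ge> 0" by (simp add: inner_axis) }
    thus ?thesis by (simp add: less_eq_vec_def)
  qed
  have ye: "inner y ones \<ge> norm v"
  proof -
    have "ones \<ge> norm (- (1 / norm v) *\<^sub>R v) *\<^sub>R ones" using assms(2)
      by (simp add: less_eq_vec_def ones_def)
    hence "inner y ones + inner v (- (1 / norm v) *\<^sub>R v) \<ge> 0" using yd by blast
    moreover have "inner v (- (1 / norm v) *\<^sub>R v) = - norm v" using assms(2)
      by (simp add: power2_norm_eq_inner[symmetric] power2_eq_square)
    ultimately show ?thesis by simp
  qed
  define z where "z = x - norm u *\<^sub>R ones"
  have z0: "z \<ge> 0" using xL by (simp add: z_def less_eq_vec_def)
  have zy: "inner z y \<ge> 0" using z0 y0 by (rule inner_nonneg_vec)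
  have cs: "inner u v \<ge> - (norm u * norm v)"
    using norm_cauchy_schwarz[of "-u" v] by simp
  have xy: "inner x y = inner z y + norm u * inner y ones"
    by (simp add: z_def inner_diff_left inner_commute[of ones y])
  have t2: "norm u * (inner y ones - norm v) \<ge> 0" using ye by simp
  have e1: "inner z y = 0" and e2: "norm u * (inner y ones - norm v) = 0"
    and e3: "inner u v = - (norm u * norm v)"
  proof -
    have s: "inner z y + norm u * (inner y ones - norm v) + (inner u v + norm u * norm v) = 0"
      using ip xy by (simp add: algebra_simps)
    have "0 \<le> inner u v + norm u * norm v" using cs by simp
    then show "inner z y = 0" "norm u * (inner y ones - norm v) = 0"
      "inner u v = - (norm u * norm v)" using s zy t2 by linarith+
  qed
  have yev: "inner y ones = norm v" using e2 assms(1) by simp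
  define lam where "lam = norm v / norm u"
  have lam0: "lam > 0" using assms by (simp add: lam_def)
  have "norm (v + lam *\<^sub>R u)^2 = 0"
  proof -
    have "norm (v + lam *\<^sub>R u)^2 = (norm v)^2 + 2 * lam * inner u v + lam^2 * (norm u)^2"
      unfolding power2_norm_eq_inner
      by (simp add: inner_add_left inner_add_right inner_commute[of v u] algebra_simps power2_eq_square)
    also have "\<dots> = 0" using e3 assms by (simp add: lam_def power2_eq_square field_simps)
    finally show ?thesis .
  qed
  hence "v = - (lam *\<^sub>R u)" by (simp add: eq_neg_iff_add_eq_0)
  moreover have "(x - norm u *\<^sub>R ones, y) \<in> compl_set nonneg_orthant"
    using z0 y0 e1 nonneg_in_dual_orthant[OF y0]
    by (simp add: compl_set_def z_def[symmetric] nonneg_orthant_def)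
  ultimately show "\<exists>lam::real. lam > 0 \<and> v = - (lam *\<^sub>R u) \<and> inner y ones = norm v \<and>
       (x - norm u *\<^sub>R ones, y) \<in> compl_set (nonneg_orthant :: (real^'p) set)"
    using lam0 yev by blast
next
  assume "\<exists>lam::real. lam > 0 \<and> v = - (lam *\<^sub>R u) \<and> inner y ones = norm v \<and>
       (x - norm u *\<^sub>R ones, y) \<in> compl_set (nonneg_orthant :: (real^'p) set)"
  then obtain lam where l0: "lam > 0" and vl: "v = - (lam *\<^sub>R u)" and yev: "inner y ones = norm v"
    and C: "(x - norm u *\<^sub>R ones, y) \<in> compl_set (nonneg_orthant :: (real^'p) set)" by blast
  have z0: "x - norm u *\<^sub>R ones \<ge> 0" using C by (simp add: compl_set_def nonneg_orthant_def)
  have y0: "y \<ge> 0" using C by (intro dual_orthant_nonneg) (simp add: compl_set_def)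
  have zy: "inner (x - norm u *\<^sub>R ones) y = 0" using C by (simp add: compl_set_def)
  have xL: "x \<ge> norm u *\<^sub>R ones" using z0 by (simp add: less_eq_vec_def)
  have dual: "(y, v) \<in> dual_cone coneL"
    unfolding dual_cone_def
  proof (clarify)
    fix a :: "real^'p" and w :: "real^'q"
    assume "(a, w) \<in> coneL"
    hence aw: "a \<ge> norm w *\<^sub>R ones" by (simp add: coneL_def)
    have "inner y a \<ge> inner y (norm w *\<^sub>R ones)" using inner_mono_vec[OF aw y0] .
    hence "inner y a \<ge> norm w * norm v" using yev by simp
    moreover have "inner v w \<ge> - (norm v * norm w)"
      using norm_cauchy_schwarz[of "-v" w] by simp
    ultimately show "0 \<le> inner (y, v) (a, w)" by (simp add: algebra_simps)
  qed
  have nv: "norm v = lam * norm u" using vl l0 by simp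
  have "inner x y = norm u * inner y ones"
    using zy by (simp add: inner_diff_left inner_commute[of ones y])
  also have "\<dots> = lam * (norm u)^2" using yev nv by (simp add: power2_eq_square)
  finally have "inner x y + inner u v = 0" using vl
    by (simp add: power2_norm_eq_inner)
  thus "((x, u), (y, v)) \<in> compl_set coneL"
    using xL dual by (simp add: compl_set_def coneL_def)
qed

end
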